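(* Let $\varepsilon>0$, let $y\in L^\infty((E_{\min},E_{\max})\times\Sigma)$ be positive, and set $s_i=\sqrt{\mathscr D^*\big(\int_{E_{\min}}^{E_{\max}}y\,g_i\,dE\big)}$ on $\Omega$, $i=1,\dots,N$; assume each $s_i$ is bounded and bounded away from zero on $\Omega$. On $L^2(\Omega;\mathbb R^N)$ define the quadratic form $$Q_y(\boldsymbol\psi,\boldsymbol\psi)=\frac12\int_\Sigma\big(\mathscr D(\boldsymbol\psi/\boldsymbol s)\big)^TG\,\mathscr D(\boldsymbol\psi/\boldsymbol s)\,d\mathcal H^n,$$ where $\boldsymbol\psi/\boldsymbol s=(\psi_1/s_1,\dots,\psi_N/s_N)$ and $\mathscr D$ is applied componentwise, and let $\lambda_y=\sup_{\|\boldsymbol\psi\|_{L^2}\le1}Q_y(\boldsymbol\psi,\boldsymbol\psi)$, assumed finite. Let $\boldsymbol w^{\mathrm{old}},\boldsymbol w^{\mathrm{new}}\in L^\infty(\Omega;[0,1]^N)$ and define $$A^\varepsilon=\int_\Omega\sum_{i=1}^N\frac{\mathscr D^*\big(\int_{E_{\min}}^{E_{\max}}y\,g_i\,dE\big)\,(w^{\mathrm{new}}_i-w^{\mathrm{old}}_i)^2}{w^{\mathrm{old}}_i+\varepsilon}\,dx,\qquad C=\frac12\int_\Sigma\big(\mathscr D(\boldsymbol w^{\mathrm{new}}-\boldsymbol w^{\mathrm{old}})\big)^TG\,\mathscr D(\boldsymbol w^{\mathrm{new}}-\boldsymbol w^{\mathrm{old}})\,d\mathcal H^n.$$ If $C>0$,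 then $\dfrac{A^\varepsilon}{C}\ge\dfrac1{1+\varepsilon}\,\dfrac1{\lambda_y}$.
   Context: Setting: $n\in\{2,3\}$, $\Omega\subset\mathbb R^n$ nonempty bounded open; $\xi\subset\mathbb R^n\setminus\overline\Omega$ a compact smooth curve of finite length without self-intersections; $L^+_{x,\theta}=\{x+s\theta:s\ge0\}$; $\Sigma=\{(x,\theta)\in\xi\times\mathbb S^{n-1}:\mathcal H^1(L^+_{x,\theta}\cap\Omega)>0\}$ with measure $\mathcal H^n$; $\mathscr Du(x,\theta)=\int_{L^+_{x,\theta}}u\,d\mathcal H^1$ ($u$ extended by $0$ outside $\Omega$), with dual $\mathscr D^*h(z)=\int_\xi|z-x|^{1-n}h\big(x,\tfrac{z-x}{|z-x|}\big)\,d\mathcal H^1(x)$ for $z\in\Omega$ ($h$ extended by $0$ off $\Sigma$). $0<E_{\min}<E_{\max}$; $I_0:[E_{\min},E_{\max}]\to[0,\infty)$ Lebesgue integrable; $g_1,\dots,g_N:[E_{\min},E_{\max}]\to[0,\infty)$ bounded measurable, $\boldsymbol g=(g_1,\dots,g_N)$; $G=\int_{E_{\min}}^{E_{\max}}I_0\,\boldsymbol g\otimes\boldsymbol g\,dE\in\mathbb R^{N\times N}$. *)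

theory Defs
  imports "HOL-Analysis.Analysis"
begin

text \<open>Normalising constant omega_s / 2^s, so that H^k agrees with k-dimensional
  surface measure for integer k.\<close>
definition hausdorff_const :: "real \<Rightarrow> real" where
  "hausdorff_const s = pi powr (s / 2) / Gamma (s / 2 + 1) / 2 powr s"

definition hausdorff_content :: "real \<Rightarrow> real \<Rightarrow> 'a::metric_space set \<Rightarrow> ennreal" where
  "hausdorff_content s \<delta> A =
     (INF C \<in> {C :: nat \<Rightarrow> 'a set. A \<subseteq> (\<Union>i. C i) \<and> (\<forall>i. bounded (C i) \<and> diameter (C i) \<le> \<delta>)}.
        (\<Sum>i. ennreal (hausdorff_const s * diameter (C i) powr s)))"

definition hausdorff_outer :: "real \<Rightarrow> 'a::metric_space set \<Rightarrow> ennreal" where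
  "hausdorff_outer s A = (SUP \<delta> \<in> {0<..}. hausdorff_content s \<delta> A)"

definition hausdorff_measure :: "real \<Rightarrow> 'a::metric_space measure" where
  "hausdorff_measure s = measure_of UNIV (sets borel) (hausdorff_outer s)"

text \<open>A compact smooth (C-infinity, regular) curve without self-intersections:
  either an embedded arc or a simple closed curve.\<close>
definition smooth_param :: "(real \<Rightarrow> 'a::real_normed_vector) \<Rightarrow> bool" where
  "smooth_param \<gamma> \<longleftrightarrow> (\<exists>D :: nat \<Rightarrow> real \<Rightarrow> 'a. D 0 = \<gamma> \<and>
      (\<forall>k t. (D k has_vector_derivative D (Suc k) t) (at t)) \<and> (\<forall>t\<in>{0..1}. D 1 t \<noteq> 0))"

definition simple_smooth_curve :: "'a::real_normed_vector set \<Rightarrow> bool" where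
  "simple_smooth_curve \<xi> \<longleftrightarrow> (\<exists>\<gamma>. smooth_param \<gamma> \<and> \<xi> = \<gamma> ` {0..1} \<and>
      (inj_on \<gamma> {0..1} \<or> ((\<forall>t. \<gamma> (t + 1) = \<gamma> t) \<and> inj_on \<gamma> {0..<1})))"

definition ray :: "'a::real_vector \<Rightarrow> 'a \<Rightarrow> 'a set" where
  "ray x \<theta> = {x + t *\<^sub>R \<theta> | t. t \<ge> 0}"

definition SigmaX :: "'a::euclidean_space set \<Rightarrow> 'a set \<Rightarrow> ('a \<times> 'a) set" where
  "SigmaX \<Omega> \<xi> = {(x, \<theta>). x \<in> \<xi> \<and> \<theta> \<in> sphere 0 1 \<and>
      emeasure (hausdorff_measure 1) (ray x \<theta> \<inter> \<Omega>) > 0}"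

definition Dop :: "'a::euclidean_space set \<Rightarrow> ('a \<Rightarrow> real) \<Rightarrow> 'a \<times> 'a \<Rightarrow> real" where
  "Dop \<Omega> u = (\<lambda>(x, \<theta>). LINT z : ray x \<theta> \<inter> \<Omega> | hausdorff_measure 1. u z)"

definition Dstar :: "'a::euclidean_space set \<Rightarrow> 'a set \<Rightarrow> ('a \<times> 'a \<Rightarrow> real) \<Rightarrow> 'a \<Rightarrow> real" where
  "Dstar \<Omega> \<xi> h z = (LINT x : \<xi> | hausdorff_measure 1.
      norm (z - x) powr (1 - real DIM('a)) *
      (if (x, (z - x) /\<^sub>R norm (z - x)) \<in> SigmaX \<Omega> \<xi> then h (x, (z - x) /\<^sub>R norm (z - x)) else 0))"

end

theory Submission
  imports Defs
begin

lemma nn_integral_cmult_ge: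
  fixes c :: ennreal
  shows "c * integral\<^sup>N M f \<le> (\<integral>\<^sup>+ x. c * f x \<partial>M)"
  unfolding nn_integral_def SUP_mult_left_ennreal
proof (intro SUP_least)
  fix g assume g: "g \<in> {g. simple_function M g \<and> g \<le> f}"
  then have sf: "simple_function M (\<lambda>x. c * g x)" and le: "(\<lambda>x. c * g x) \<le> (\<lambda>x. c * f x)"
    by (auto simp: le_fun_def intro!: mult_left_mono)
  have "c * integral\<^sup>S M g = integral\<^sup>S M (\<lambda>x. c * g x)" using g by simp
  also have "\<dots> \<le> (SUP g \<in> {g. simple_function M g \<and> g \<le> (\<lambda>x. c * f x)}. integral\<^sup>S M g)"
    using sf le by (intro SUP_upper) auto
  finally show "c * integral\<^sup>S M g \<le> (SUP g \<in> {g. simple_function M g \<and> g \<le> (\<lambda>x. c * f x)}. integral\<^sup>S M g)" .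
qed

lemma Dop_scale:
  assumes "\<forall>z\<in>\<Omega>. u z = t * v z"
  shows "Dop \<Omega> u p = t * Dop \<Omega> v p"
proof -
  obtain x \<theta> where p: "p = (x, \<theta>)" by fastforce
  have "(\<lambda>z. indicator (ray x \<theta> \<inter> \<Omega>) z *\<^sub>R u z) = (\<lambda>z. t * (indicator (ray x \<theta> \<inter> \<Omega>) z *\<^sub>R v z))"
    using assms by (auto simp: indicator_def)
  then show ?thesis unfolding Dop_def p set_lebesgue_integral_def by simp
qed

lemma qf_scale:
  fixes G :: "nat \<Rightarrow> nat \<Rightarrow> real"
  assumes "\<forall>i\<in>{1..N}. u i = t * v i"
  shows "(1/2) * (\<Sum>i\<in>{1..N}. \<Sum>j\<in>{1..N}. u i * G i j * u j) =
         t\<^sup>2 * ((1/2) * (\<Sum>i\<in>{1..N}. \<Sum>j\<in>{1..N}. v i * G i j * v j))"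
proof -
  have "(\<Sum>i\<in>{1..N}. \<Sum>j\<in>{1..N}. u i * G i j * u j) = (\<Sum>i\<in>{1..N}. \<Sum>j\<in>{1..N}. t\<^sup>2 * (v i * G i j * v j))"
    using assms by (intro sum.cong refl) (auto simp: power2_eq_square)
  then show ?thesis by (simp add: sum_distrib_left)
qed


theorem lemma3p6:
  fixes \<Omega> \<xi> :: "'a::euclidean_space set"
    and Emin Emax \<epsilon> :: real and N :: nat
    and I0 :: "real \<Rightarrow> real" and g :: "nat \<Rightarrow> real \<Rightarrow> real"
    and y :: "real \<Rightarrow> 'a \<times> 'a \<Rightarrow> real"
    and wold wnew :: "nat \<Rightarrow> 'a \<Rightarrow> real"
  assumes dim: "DIM('a) = 2 \<or> DIM('a) = 3"
    and Omega: "\<Omega> \<noteq> {}" "bounded \<Omega>" "open \<Omega>"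
    and xi: "simple_smooth_curve \<xi>" "\<xi> \<inter> closure \<Omega> = {}"
    and Erange: "0 < Emin" "Emin < Emax"
    and I0: "set_integrable lborel {Emin..Emax} I0" "\<forall>E\<in>{Emin..Emax}. I0 E \<ge> 0"
    and g: "\<forall>i\<in>{1..N}. set_borel_measurable lborel {Emin..Emax} (g i) \<and>
              (\<forall>E\<in>{Emin..Emax}. g i E \<ge> 0) \<and> bounded (g i ` {Emin..Emax})"
    and eps: "\<epsilon> > 0"
    and y_meas: "(\<lambda>(E, p). y E p) \<in> borel_measurable (restrict_space lborel {Emin..Emax} \<Otimes>\<^sub>M
                    restrict_space (hausdorff_measure (real DIM('a))) (SigmaX \<Omega> \<xi>))"
    and y_bdd: "\<exists>M. \<forall>E\<in>{Emin..Emax}. \<forall>p\<in>SigmaX \<Omega> \<xi>. \<bar>y E p\<bar> \<le> M"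
    and y_pos: "\<forall>E\<in>{Emin..Emax}. \<forall>p\<in>SigmaX \<Omega> \<xi>. y E p > 0"
    and s_def: "s \<equiv> (\<lambda>i z. sqrt (Dstar \<Omega> \<xi> (\<lambda>p. LINT E:{Emin..Emax}|lborel. y E p * g i E) z))"
    and s_ok: "\<forall>i\<in>{1..N}. s i \<in> borel_measurable (restrict_space lborel \<Omega>) \<and>
                  (\<exists>c>0. \<exists>K. \<forall>z\<in>\<Omega>. c \<le> s i z \<and> s i z \<le> K)"
    and G_def: "G \<equiv> (\<lambda>i j. LINT E:{Emin..Emax}|lborel. I0 E * g i E * g j E)"
    and qf_def: "qf \<equiv> (\<lambda>v :: nat \<Rightarrow> real. (1/2) * (\<Sum>i\<in>{1..N}. \<Sum>j\<in>{1..N}. v i * G i j * v j))"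
    and Q_def: "Q \<equiv> (\<lambda>\<psi> :: nat \<Rightarrow> 'a \<Rightarrow> real.
                 \<integral>\<^sup>+ p \<in> SigmaX \<Omega> \<xi>. ennreal (qf (\<lambda>i. Dop \<Omega> (\<lambda>z. \<psi> i z / s i z) p))
                   \<partial>hausdorff_measure (real DIM('a)))"
    and Adm_def: "Adm \<equiv> {\<psi> :: nat \<Rightarrow> 'a \<Rightarrow> real. (\<forall>i\<in>{1..N}. \<psi> i \<in> borel_measurable lborel) \<and>
                   (\<integral>\<^sup>+ z \<in> \<Omega>. ennreal (\<Sum>i\<in>{1..N}. (\<psi> i z)\<^sup>2) \<partial>lborel) \<le> 1}"
    and lam_def: "lam \<equiv> (SUP \<psi>\<in>Adm. Q \<psi>)"
    and lam_fin: "lam < \<infinity>"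
    and w: "\<forall>i\<in>{1..N}. wold i \<in> borel_measurable lborel \<and> wnew i \<in> borel_measurable lborel \<and>
              (\<forall>z\<in>\<Omega>. wold i z \<in> {0..1} \<and> wnew i z \<in> {0..1})"
    and A_def: "A \<equiv> (LINT z:\<Omega>|lborel. \<Sum>i\<in>{1..N}.
                 Dstar \<Omega> \<xi> (\<lambda>p. LINT E:{Emin..Emax}|lborel. y E p * g i E) z *
                 (wnew i z - wold i z)\<^sup>2 / (wold i z + \<epsilon>))"
    and C_def: "C \<equiv> \<integral>\<^sup>+ p \<in> SigmaX \<Omega> \<xi>. ennreal (qf (\<lambda>i. Dop \<Omega> (\<lambda>z. wnew i z - wold i z) p))
                   \<partial>hausdorff_measure (real DIM('a))"
    and C_pos: "C > 0"
  shows "A / enn2real C \<ge> 1 / (1 + \<epsilon>) * (1 / enn2real lam)"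
proof -
  have Om_sets: "\<Omega> \<in> sets lborel" using Omega(3) by simp
  have Om_fin: "emeasure lborel \<Omega> < \<infinity>" using Omega(2) by (rule emeasure_bounded_finite)
  define D where "D i z = Dstar \<Omega> \<xi> (\<lambda>p. LINT E:{Emin..Emax}|lborel. y E p * g i E) z" for i z
  have s_eq: "\<And>i z. s i z = sqrt (D i z)" using s_def D_def by simp
  have "\<forall>i\<in>{1..N}. \<exists>K. \<forall>z\<in>\<Omega>. 0 < s i z \<and> s i z \<le> K" using s_ok by (meson less_le_trans)
  then obtain K where K: "\<forall>i\<in>{1..N}. \<forall>z\<in>\<Omega>. 0 < s i z \<and> s i z \<le> K i" by metis
  have sD: "(s i z)\<^sup>2 = D i z \<and> D i z > 0" if "i \<in> {1..N}" "z \<in> \<Omega>" for i z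
  proof -
    have "0 < sqrt (D i z)" using K that s_eq by metis
    then have "D i z > 0" by simp
    then show ?thesis using s_eq by simp
  qed
  have s_pos: "0 < s i z" if "i \<in> {1..N}" "z \<in> \<Omega>" for i z using K that by blast
  define dw where "dw i z = wnew i z - wold i z" for i z
  have w01: "wold i z \<in> {0..1} \<and> wnew i z \<in> {0..1}" if "i \<in> {1..N}" "z \<in> \<Omega>" for i z
    using w that by blast
  have dw_bd: "(dw i z)\<^sup>2 \<le> 1" if "i \<in> {1..N}" "z \<in> \<Omega>" for i z
  proof -
    have "\<bar>dw i z\<bar> \<le> 1" using w01[OF that] unfolding dw_def by auto
    then show ?thesis by (simp add: abs_square_le_1)
  qed
  define SS where "SS i z = indicator \<Omega> z * s i z" for i z
  have SS_meas: "SS i \<in> borel_measurable lborel" if "i \<in> {1..N}" for i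
  proof -
    have "s i \<in> borel_measurable (restrict_space lborel \<Omega>)" using s_ok that by blast
    then have "(\<lambda>x. indicator \<Omega> x *\<^sub>R s i x) \<in> borel_measurable lborel"
      using borel_measurable_restrict_space_iff[of \<Omega> lborel "s i"] Om_sets by simp
    then show ?thesis unfolding SS_def[abs_def] by simp
  qed
  have dw_meas: "dw i \<in> borel_measurable lborel" if "i \<in> {1..N}" for i
    using w that unfolding dw_def[abs_def] by (auto intro!: borel_measurable_diff)
  have wold_meas: "wold i \<in> borel_measurable lborel" if "i \<in> {1..N}" for i
    using w that by auto
  define F where "F z = (\<Sum>i\<in>{1..N}. (s i z)\<^sup>2 * (dw i z)\<^sup>2)" for z
  define F' where "F' z = (\<Sum>i\<in>{1..N}. (SS i z)\<^sup>2 * (dw i z)\<^sup>2)" for z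
  define B where "B = (\<Sum>i\<in>{1..N}. (K i)\<^sup>2)"
  have F_eq: "F' z = F z" if "z \<in> \<Omega>" for z using that by (simp add: F_def F'_def SS_def)
  have F_nn: "0 \<le> F z" for z by (simp add: F_def sum_nonneg)
  have F_bd: "F z \<le> B" if "z \<in> \<Omega>" for z
    unfolding F_def B_def
  proof (rule sum_mono)
    fix i assume i: "i \<in> {1..N}"
    have "(s i z)\<^sup>2 \<le> (K i)\<^sup>2" using K i that by (intro power_mono) (auto intro: less_imp_le)
    then show "(s i z)\<^sup>2 * (dw i z)\<^sup>2 \<le> (K i)\<^sup>2"
      using dw_bd[OF i that] mult_mono[of "(s i z)\<^sup>2" "(K i)\<^sup>2" "(dw i z)\<^sup>2" 1] by simp
  qed
  have F'_meas: "F' \<in> borel_measurable lborel"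
    unfolding F'_def[abs_def] using SS_meas dw_meas by (auto intro!: borel_measurable_sum)
  have F_int: "set_integrable lborel \<Omega> F"
  proof -
    have "(\<lambda>z. indicator \<Omega> z *\<^sub>R F z) = (\<lambda>z. indicator \<Omega> z *\<^sub>R F' z)"
      by (auto simp: indicator_def F_eq)
    moreover have "integrable lborel (\<lambda>z. indicator \<Omega> z *\<^sub>R F' z)"
      by (rule integrableI_bounded_set_indicator[where B=B]) (use Om_sets F'_meas Om_fin F_eq F_bd F_nn in auto)
    ultimately show ?thesis unfolding set_integrable_def by simp
  qed
  define P where "P = (LINT z:\<Omega>|lborel. F z)"
  have P_nn: "0 \<le> P" unfolding P_def set_lebesgue_integral_def
    by (rule integral_nonneg_AE) (auto simp: F_nn)
  define H where "H z = (\<Sum>i\<in>{1..N}. D i z * (wnew i z - wold i z)\<^sup>2 / (wold i z + \<epsilon>))" for z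
  define H' where "H' z = (\<Sum>i\<in>{1..N}. (SS i z)\<^sup>2 * (dw i z)\<^sup>2 / (wold i z + \<epsilon>))" for z
  have H_eq: "H' z = H z" if "z \<in> \<Omega>" for z
    using that sD by (auto simp: H_def H'_def SS_def dw_def intro!: sum.cong)
  have H'_meas: "H' \<in> borel_measurable lborel"
    unfolding H'_def[abs_def] using SS_meas dw_meas wold_meas
    by (auto intro!: borel_measurable_sum borel_measurable_divide borel_measurable_add)
  have H_bd: "\<bar>H z\<bar> \<le> B / \<epsilon>" if zO: "z \<in> \<Omega>" for z
  proof -
    have t: "0 \<le> D i z * (wnew i z - wold i z)\<^sup>2 / (wold i z + \<epsilon>) \<and>
             D i z * (wnew i z - wold i z)\<^sup>2 / (wold i z + \<epsilon>) \<le> (K i)\<^sup>2 / \<epsilon>" if i: "i \<in> {1..N}" for i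
    proof -
      have a: "D i z * (dw i z)\<^sup>2 \<le> (K i)\<^sup>2"
      proof -
        have "(s i z)\<^sup>2 \<le> (K i)\<^sup>2" using K i zO by (intro power_mono) (auto intro: less_imp_le)
        then show ?thesis using sD[OF i zO] dw_bd[OF i zO]
            mult_mono[of "(s i z)\<^sup>2" "(K i)\<^sup>2" "(dw i z)\<^sup>2" 1] by simp
      qed
      have a0: "0 \<le> D i z * (dw i z)\<^sup>2" using sD[OF i zO] by simp
      have b: "\<epsilon> \<le> wold i z + \<epsilon>" using w01[OF i zO] by simp
      have "D i z * (dw i z)\<^sup>2 / (wold i z + \<epsilon>) \<le> (K i)\<^sup>2 / \<epsilon>"
        using a a0 b eps by (meson frac_le order_trans zero_le_power2 less_imp_le)
      moreover have "0 \<le> D i z * (dw i z)\<^sup>2 / (wold i z + \<epsilon>)" using a0 b eps by simp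
      ultimately show ?thesis by (simp add: dw_def)
    qed
    have "0 \<le> H z" unfolding H_def using t by (intro sum_nonneg) auto
    moreover have "H z \<le> (\<Sum>i\<in>{1..N}. (K i)\<^sup>2 / \<epsilon>)" unfolding H_def using t by (intro sum_mono) auto
    ultimately show ?thesis by (simp add: B_def sum_divide_distrib)
  qed
  have H_int: "set_integrable lborel \<Omega> H"
  proof -
    have "(\<lambda>z. indicator \<Omega> z *\<^sub>R H z) = (\<lambda>z. indicator \<Omega> z *\<^sub>R H' z)"
      by (auto simp: indicator_def H_eq)
    moreover have "integrable lborel (\<lambda>z. indicator \<Omega> z *\<^sub>R H' z)"
      by (rule integrableI_bounded_set_indicator[where B="B/\<epsilon>"]) (use Om_sets H'_meas Om_fin H_eq H_bd in auto)
    ultimately show ?thesis unfolding set_integrable_def by simp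
  qed
  have A_eq: "A = (LINT z:\<Omega>|lborel. H z)" unfolding A_def H_def D_def by simp
  have A_ge: "P / (1 + \<epsilon>) \<le> A"
  proof -
    have "(LINT z:\<Omega>|lborel. F z / (1 + \<epsilon>)) \<le> (LINT z:\<Omega>|lborel. H z)"
    proof (rule set_integral_mono)
      show "set_integrable lborel \<Omega> (\<lambda>z. F z / (1 + \<epsilon>))" using F_int by simp
      show "set_integrable lborel \<Omega> H" by (rule H_int)
      fix z assume z: "z \<in> \<Omega>"
      have "F z / (1 + \<epsilon>) = (\<Sum>i\<in>{1..N}. (s i z)\<^sup>2 * (dw i z)\<^sup>2 / (1 + \<epsilon>))"
        by (simp add: F_def sum_divide_distrib)
      also have "\<dots> \<le> H z" unfolding H_def
      proof (rule sum_mono)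
        fix i assume i: "i \<in> {1..N}"
        have a0: "0 \<le> (s i z)\<^sup>2 * (dw i z)\<^sup>2" by simp
        have "wold i z + \<epsilon> \<le> 1 + \<epsilon>" using w01[OF i z] by simp
        then have "(s i z)\<^sup>2 * (dw i z)\<^sup>2 / (1 + \<epsilon>) \<le> (s i z)\<^sup>2 * (dw i z)\<^sup>2 / (wold i z + \<epsilon>)"
          using a0 w01[OF i z] eps by (intro divide_left_mono) auto
        then show "(s i z)\<^sup>2 * (dw i z)\<^sup>2 / (1 + \<epsilon>) \<le> D i z * (wnew i z - wold i z)\<^sup>2 / (wold i z + \<epsilon>)"
          using sD[OF i z] by (simp add: dw_def)
      qed
      finally show "F z / (1 + \<epsilon>) \<le> H z" .
    qed
    then show ?thesis unfolding A_eq P_def by simp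
  qed
  have key: "ennreal (t\<^sup>2) * C \<le> lam" if tP: "t\<^sup>2 * P \<le> 1" for t
  proof -
    define \<phi> where "\<phi> i z = t * (SS i z * dw i z)" for i z
    have nrm: "(\<integral>\<^sup>+ z \<in> \<Omega>. ennreal (\<Sum>i\<in>{1..N}. (\<phi> i z)\<^sup>2) \<partial>lborel) = ennreal (t\<^sup>2 * P)"
    proof -
      have eq1: "(\<lambda>z. ennreal (\<Sum>i\<in>{1..N}. (\<phi> i z)\<^sup>2) * indicator \<Omega> z) =
            (\<lambda>z. ennreal (t\<^sup>2 * (indicator \<Omega> z *\<^sub>R F z)))"
        by (auto simp: indicator_def \<phi>_def SS_def F_def power_mult_distrib sum_distrib_left mult.assoc)
      have int1: "integrable lborel (\<lambda>z. t\<^sup>2 * (indicator \<Omega> z *\<^sub>R F z))"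
        using F_int unfolding set_integrable_def by simp
      have val1: "integral\<^sup>L lborel (\<lambda>z. t\<^sup>2 * (indicator \<Omega> z *\<^sub>R F z)) = t\<^sup>2 * P"
        unfolding P_def set_lebesgue_integral_def by simp
      have "(\<integral>\<^sup>+ z \<in> \<Omega>. ennreal (\<Sum>i\<in>{1..N}. (\<phi> i z)\<^sup>2) \<partial>lborel) =
            (\<integral>\<^sup>+ z. ennreal (t\<^sup>2 * (indicator \<Omega> z *\<^sub>R F z)) \<partial>lborel)"
        by (simp only: eq1)
      also have "\<dots> = ennreal (integral\<^sup>L lborel (\<lambda>z. t\<^sup>2 * (indicator \<Omega> z *\<^sub>R F z)))"
        by (rule nn_integral_eq_integral[OF int1]) (use F_nn in \<open>auto simp: indicator_def\<close>)
      also have "\<dots> = ennreal (t\<^sup>2 * P)" by (simp only: val1)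
      finally show ?thesis .
    qed
    have "\<phi> \<in> Adm"
    proof -
      have "\<phi> i \<in> borel_measurable lborel" if "i \<in> {1..N}" for i
        unfolding \<phi>_def[abs_def] using SS_meas[OF that] dw_meas[OF that] by auto
      moreover have "ennreal (t\<^sup>2 * P) \<le> 1" using tP by simp
      ultimately show ?thesis unfolding Adm_def using nrm by auto
    qed
    then have le: "Q \<phi> \<le> lam" unfolding lam_def by (rule SUP_upper)
    have pt: "ennreal (qf (\<lambda>i. Dop \<Omega> (\<lambda>z. \<phi> i z / s i z) p)) * indicator (SigmaX \<Omega> \<xi>) p =
          ennreal (t\<^sup>2) * (ennreal (qf (\<lambda>i. Dop \<Omega> (\<lambda>z. wnew i z - wold i z) p)) * indicator (SigmaX \<Omega> \<xi>) p)" for p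
    proof -
      have "\<forall>i\<in>{1..N}. Dop \<Omega> (\<lambda>z. \<phi> i z / s i z) p = t * Dop \<Omega> (\<lambda>z. wnew i z - wold i z) p"
      proof
        fix i assume i: "i \<in> {1..N}"
        show "Dop \<Omega> (\<lambda>z. \<phi> i z / s i z) p = t * Dop \<Omega> (\<lambda>z. wnew i z - wold i z) p"
          by (rule Dop_scale) (use s_pos[OF i] in \<open>auto simp: \<phi>_def SS_def dw_def; metis less_irrefl\<close>)
      qed
      then have "qf (\<lambda>i. Dop \<Omega> (\<lambda>z. \<phi> i z / s i z) p) = t\<^sup>2 * qf (\<lambda>i. Dop \<Omega> (\<lambda>z. wnew i z - wold i z) p)"
        unfolding qf_def by (rule qf_scale)
      then show ?thesis by (simp add: ennreal_mult' mult.assoc)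
    qed
    have "ennreal (t\<^sup>2) * C \<le> Q \<phi>"
      unfolding C_def Q_def pt by (rule nn_integral_cmult_ge)
    with le show ?thesis by simp
  qed
  show ?thesis
  proof (cases "P = 0")
    case True
    have "C \<noteq> \<infinity>"
    proof
      assume "C = \<infinity>"
      then have "ennreal 1 * C \<le> lam" using key[of 1] True by simp
      then show False using \<open>C = \<infinity>\<close> lam_fin by simp
    qed
    then have c: "C = ennreal (enn2real C)" "0 < enn2real C" using C_pos
      by (auto simp: enn2real_positive_iff less_top)
    have l: "lam = ennreal (enn2real lam)" "0 \<le> enn2real lam" using lam_fin by auto
    define c where "c = enn2real C"
    define l where "l = enn2real lam"
    note c = c[folded c_def] and l = l[folded l_def]
    define t where "t = sqrt ((l + 1) / c)"
    have "ennreal (t\<^sup>2) * C \<le> lam" using key True by simp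
    moreover have "t\<^sup>2 = (l + 1) / c" unfolding t_def using c l by simp
    ultimately have "ennreal ((l + 1) / c) * ennreal c \<le> ennreal l" using c l
      by simp
    moreover have "ennreal ((l + 1) / c) * ennreal c = ennreal (((l + 1) / c) * c)"
      by (rule ennreal_mult[symmetric]) (use c l in auto)
    ultimately have "ennreal (((l + 1) / c) * c) \<le> ennreal l" by simp
    then have "l + 1 \<le> l" using c l by (simp add: ennreal_le_iff)
    then show ?thesis by simp
  next
    case False
    then have Ppos: "0 < P" using P_nn by simp
    define t where "t = 1 / sqrt P"
    have t2: "t\<^sup>2 = 1 / P" unfolding t_def using Ppos by (simp add: power_divide)
    have kk: "ennreal (1 / P) * C \<le> lam" using key[of t] t2 Ppos by simp
    have "C \<noteq> \<infinity>"
    proof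
      assume "C = \<infinity>"
      then show False using kk lam_fin Ppos by (simp add: ennreal_mult_top)
    qed
    then have c: "C = ennreal (enn2real C)" "0 < enn2real C" using C_pos
      by (auto simp: enn2real_positive_iff less_top)
    have l: "lam = ennreal (enn2real lam)" "0 \<le> enn2real lam" using lam_fin by auto
    define c where "c = enn2real C"
    define l where "l = enn2real lam"
    note c = c[folded c_def] and l = l[folded l_def]
    have "ennreal (1 / P) * ennreal c \<le> ennreal l" using kk c l by simp
    moreover have "ennreal (1 / P) * ennreal c = ennreal (1 / P * c)"
      by (rule ennreal_mult[symmetric]) (use c Ppos in auto)
    ultimately have "ennreal (1 / P * c) \<le> ennreal l" by simp
    then have cl: "c / P \<le> l" using l by (simp add: ennreal_le_iff)
    have lpos: "0 < l" using cl c Ppos by (smt (verit) divide_pos_pos)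
    have ec: "enn2real C = c" "enn2real lam = l" using c_def l_def by auto
    have "1 / (1 + \<epsilon>) * (1 / l) \<le> P / (1 + \<epsilon>) / c"
    proof -
      have "c \<le> l * P" using cl Ppos by (simp add: divide_le_eq mult.commute)
      then have "1 / l \<le> P / c" using lpos c by (simp add: field_simps)
      then have "1 / (1 + \<epsilon>) * (1 / l) \<le> 1 / (1 + \<epsilon>) * (P / c)"
        using eps by (intro mult_left_mono) auto
      moreover have "1 / (1 + \<epsilon>) * (P / c) = P / (1 + \<epsilon>) / c" by simp
      ultimately show ?thesis by simp
    qed
    also have "\<dots> \<le> A / c" using A_ge c(2) by (rule divide_right_mono[OF _ less_imp_le])
    finally show ?thesis using ec by simp
  qed
qed

end
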